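(* Let $X,Y$ be countable discrete metric spaces and $d\in D(X,Y)$. Then $\mathbb K(H_X,H_Y)\subset M_d(X,Y)$. Moreover, if $\mathbb K(H_X,H_Y)=M_d(X,Y)$, then there exists $L>0$ such that for every injective map $f:X\to Y$ the set $\{x\in X: d(x,f(x))\le L\}$ is finite.
   Context: $H_X=l^2(X)$ with basis $\{\delta_x\}$; $\mathbb K(H_X,H_Y)$ is the space of compact operators $H_X\to H_Y$. $D(X,Y)$ is the set of metrics on $X\sqcup Y$ restricting to $d_X$ and $d_Y$. For $T:H_X\to H_Y$ bounded, $T_{yx}=\langle T\delta_x,\delta_y\rangle$; $T$ has propagation less than $L$ w.r.t. $d$ if $T_{yx}=0$ whenever $d(x,y)\ge L$. $M_d(X,Y)$ is the norm closure in $\mathbb B(H_X,H_Y)$ of the bounded operators of finite propagation w.r.t. $d$. *)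

theory Defs
  imports "HOL-Analysis.Analysis"
begin

definition discrete_metric_space :: "'a set \<Rightarrow> ('a \<Rightarrow> 'a \<Rightarrow> real) \<Rightarrow> bool" where
  "discrete_metric_space X dX \<longleftrightarrow> Metric_space X dX \<and>
     (\<forall>x\<in>X. \<exists>e>0. \<forall>x'\<in>X. dX x x' < e \<longrightarrow> x' = x)"

definition Dmetrics :: "'a set \<Rightarrow> ('a \<Rightarrow> 'a \<Rightarrow> real) \<Rightarrow> 'b set \<Rightarrow> ('b \<Rightarrow> 'b \<Rightarrow> real)
    \<Rightarrow> (('a + 'b) \<Rightarrow> ('a + 'b) \<Rightarrow> real) set" where
  "Dmetrics X dX Y dY = {d. Metric_space (X <+> Y) d \<and>
     (\<forall>x\<in>X. \<forall>x'\<in>X. d (Inl x) (Inl x') = dX x x') \<and>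
     (\<forall>y\<in>Y. \<forall>y'\<in>Y. d (Inr y) (Inr y') = dY y y')}"

definition l2 :: "'a set \<Rightarrow> ('a \<Rightarrow> complex) set" where
  "l2 X = {f. (\<forall>x. x \<notin> X \<longrightarrow> f x = 0) \<and> (\<lambda>x. (cmod (f x))\<^sup>2) summable_on X}"

definition l2norm :: "'a set \<Rightarrow> ('a \<Rightarrow> complex) \<Rightarrow> real" where
  "l2norm X f = sqrt (infsum (\<lambda>x. (cmod (f x))\<^sup>2) X)"

definition l2dist :: "'a set \<Rightarrow> ('a \<Rightarrow> complex) \<Rightarrow> ('a \<Rightarrow> complex) \<Rightarrow> real" where
  "l2dist X f g = l2norm X (\<lambda>x. f x - g x)"

definition delta :: "'a \<Rightarrow> 'a \<Rightarrow> complex" where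
  "delta x = (\<lambda>z. if z = x then 1 else 0)"

text \<open>Bounded (linear) operators H_X \<rightarrow> H_Y; only the values on l2 X matter.\<close>
definition bounded_op :: "'a set \<Rightarrow> 'b set \<Rightarrow> (('a \<Rightarrow> complex) \<Rightarrow> ('b \<Rightarrow> complex)) \<Rightarrow> bool" where
  "bounded_op X Y T \<longleftrightarrow>
     (\<forall>f\<in>l2 X. T f \<in> l2 Y) \<and>
     (\<forall>f\<in>l2 X. \<forall>g\<in>l2 X. T (\<lambda>x. f x + g x) = (\<lambda>y. T f y + T g y)) \<and>
     (\<forall>f\<in>l2 X. \<forall>c::complex. T (\<lambda>x. c * f x) = (\<lambda>y. c * T f y)) \<and>
     (\<exists>C. \<forall>f\<in>l2 X. l2norm Y (T f) \<le> C * l2norm X f)"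

definition opnorm :: "'a set \<Rightarrow> 'b set \<Rightarrow> (('a \<Rightarrow> complex) \<Rightarrow> ('b \<Rightarrow> complex)) \<Rightarrow> real" where
  "opnorm X Y T = Sup {l2norm Y (T f) | f. f \<in> l2 X \<and> l2norm X f \<le> 1}"

definition matrix_coeff :: "(('a \<Rightarrow> complex) \<Rightarrow> ('b \<Rightarrow> complex)) \<Rightarrow> 'b \<Rightarrow> 'a \<Rightarrow> complex" where
  "matrix_coeff T y x = T (delta x) y"

definition finite_propagation ::
  "'a set \<Rightarrow> 'b set \<Rightarrow> (('a + 'b) \<Rightarrow> ('a + 'b) \<Rightarrow> real) \<Rightarrow> (('a \<Rightarrow> complex) \<Rightarrow> ('b \<Rightarrow> complex)) \<Rightarrow> bool" where
  "finite_propagation X Y d T \<longleftrightarrow>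
     (\<exists>L. \<forall>x\<in>X. \<forall>y\<in>Y. d (Inl x) (Inr y) \<ge> L \<longrightarrow> matrix_coeff T y x = 0)"

text \<open>M_d(X,Y): norm closure (in B(H_X,H_Y)) of the bounded finite propagation operators.\<close>
definition in_Md ::
  "'a set \<Rightarrow> 'b set \<Rightarrow> (('a + 'b) \<Rightarrow> ('a + 'b) \<Rightarrow> real) \<Rightarrow> (('a \<Rightarrow> complex) \<Rightarrow> ('b \<Rightarrow> complex)) \<Rightarrow> bool" where
  "in_Md X Y d T \<longleftrightarrow> bounded_op X Y T \<and>
     (\<forall>\<epsilon>>0. \<exists>S. bounded_op X Y S \<and> finite_propagation X Y d S \<and>
        opnorm X Y (\<lambda>f y. T f y - S f y) < \<epsilon>)"

definition compact_op :: "'a set \<Rightarrow> 'b set \<Rightarrow> (('a \<Rightarrow> complex) \<Rightarrow> ('b \<Rightarrow> complex)) \<Rightarrow> bool" where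
  "compact_op X Y T \<longleftrightarrow> bounded_op X Y T \<and>
     compactin (Metric_space.mtopology (l2 Y) (l2dist Y))
       ((Metric_space.mtopology (l2 Y) (l2dist Y)) closure_of
          (T ` {f \<in> l2 X. l2norm X f \<le> 1}))"

end

theory Submission
  imports Defs
begin


definition rst :: "'a set \<Rightarrow> ('a\<Rightarrow>complex) \<Rightarrow> 'a \<Rightarrow> complex" where
  "rst A f = (\<lambda>x. if x \<in> A then f x else 0)"

lemma l2_D: "f \<in> l2 X \<Longrightarrow> (\<lambda>x. (cmod (f x))\<^sup>2) summable_on X"
  "f \<in> l2 X \<Longrightarrow> x \<notin> X \<Longrightarrow> f x = 0"
  by (auto simp: l2_def)

lemma l2norm_nonneg: "0 \<le> l2norm X f"
  unfolding l2norm_def by (simp add: infsum_nonneg)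

lemma l2norm_sq: "(l2norm X f)\<^sup>2 = infsum (\<lambda>x. (cmod (f x))\<^sup>2) X"
  unfolding l2norm_def by (simp add: infsum_nonneg)

lemma NL:
  assumes "(\<lambda>x. (cmod (f x))\<^sup>2) summable_on X" "finite F" "F \<subseteq> X"
  shows "(\<Sum>x\<in>F. (cmod (f x))\<^sup>2) \<le> (l2norm X f)\<^sup>2"
  unfolding l2norm_sq by (rule finite_sum_le_infsum) (use assms in auto)

lemma NP:
  assumes "(\<lambda>x. (cmod (f x))\<^sup>2) summable_on X" "x \<in> X"
  shows "cmod (f x) \<le> l2norm X f"
proof -
  have "(cmod (f x))\<^sup>2 \<le> (l2norm X f)\<^sup>2" using NL[OF assms(1), of "{x}"] assms by simp
  thus ?thesis using l2norm_nonneg by (rule power2_le_imp_le)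
qed

lemma NB:
  assumes "(\<lambda>x. (cmod (f x))\<^sup>2) summable_on X" "0 \<le> B"
    and "\<And>F. finite F \<Longrightarrow> F \<subseteq> X \<Longrightarrow> sqrt (\<Sum>x\<in>F. (cmod (f x))\<^sup>2) \<le> B"
  shows "l2norm X f \<le> B"
proof -
  have "infsum (\<lambda>x. (cmod (f x))\<^sup>2) X \<le> B\<^sup>2"
  proof (rule infsum_le_finite_sums[OF assms(1)])
    fix F assume F: "finite F" "F \<subseteq> X"
    have "(\<Sum>x\<in>F. (cmod (f x))\<^sup>2) = (sqrt (\<Sum>x\<in>F. (cmod (f x))\<^sup>2))\<^sup>2"
      by (simp add: sum_nonneg)
    also have "\<dots> \<le> B\<^sup>2" using assms(3)[OF F] by (intro power_mono) (auto simp: sum_nonneg)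
    finally show "(\<Sum>x\<in>F. (cmod (f x))\<^sup>2) \<le> B\<^sup>2" .
  qed
  hence "sqrt (infsum (\<lambda>x. (cmod (f x))\<^sup>2) X) \<le> sqrt (B\<^sup>2)" by (rule real_sqrt_le_mono)
  thus ?thesis using assms(2) by (simp add: l2norm_def)
qed

lemma l2_I: "(\<lambda>x. (cmod (f x))\<^sup>2) summable_on X \<Longrightarrow> (\<And>x. x \<notin> X \<Longrightarrow> f x = 0) \<Longrightarrow> f \<in> l2 X"
  by (auto simp: l2_def)

lemma zero_l2: "(\<lambda>x. 0) \<in> l2 X" by (auto simp: l2_def)
lemma l2norm_zero: "l2norm X (\<lambda>x. 0) = 0" by (simp add: l2norm_def)

lemma l2_add:
  assumes "f \<in> l2 X" "g \<in> l2 X"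
  shows "(\<lambda>x. f x + g x) \<in> l2 X"
proof (rule l2_I)
  have s: "(\<lambda>x. 2 * (cmod (f x))\<^sup>2 + 2 * (cmod (g x))\<^sup>2) summable_on X"
    by (intro summable_on_add summable_on_cmult_right l2_D assms)
  show "(\<lambda>x. (cmod (f x + g x))\<^sup>2) summable_on X"
  proof (rule summable_on_comparison_test[OF s])
    fix x
    have "cmod (f x + g x) \<le> cmod (f x) + cmod (g x)" by (rule norm_triangle_ineq)
    hence "(cmod (f x + g x))\<^sup>2 \<le> (cmod (f x) + cmod (g x))\<^sup>2" by (simp add: power_mono)
    also have "\<dots> \<le> 2 * (cmod (f x))\<^sup>2 + 2 * (cmod (g x))\<^sup>2"
      by (smt (verit) sum_squares_bound zero_le_power2 power2_sum)
    finally show "(cmod (f x + g x))\<^sup>2 \<le> 2 * (cmod (f x))\<^sup>2 + 2 * (cmod (g x))\<^sup>2" .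
  qed simp
qed (use assms in \<open>auto simp: l2_def\<close>)

lemma l2_scale:
  assumes "f \<in> l2 X"
  shows "(\<lambda>x. c * f x) \<in> l2 X"
proof (rule l2_I)
  have "(\<lambda>x. (cmod c)\<^sup>2 * (cmod (f x))\<^sup>2) summable_on X"
    by (intro summable_on_cmult_right l2_D assms)
  thus "(\<lambda>x. (cmod (c * f x))\<^sup>2) summable_on X" by (simp add: norm_mult power_mult_distrib)
qed (use assms in \<open>auto simp: l2_def\<close>)

lemma l2_diff:
  assumes "f \<in> l2 X" "g \<in> l2 X"
  shows "(\<lambda>x. f x - g x) \<in> l2 X"
  using l2_add[OF assms(1) l2_scale[OF assms(2), of "-1"]] by simp

lemma l2_rst:
  assumes "f \<in> l2 X"
  shows "rst A f \<in> l2 X" "l2norm X (rst A f) \<le> l2norm X f"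
proof -
  have s: "(\<lambda>x. (cmod (rst A f x))\<^sup>2) summable_on X"
    by (rule summable_on_comparison_test[OF l2_D(1)[OF assms]]) (auto simp: rst_def)
  thus "rst A f \<in> l2 X" using assms by (auto simp: l2_def rst_def)
  show "l2norm X (rst A f) \<le> l2norm X f"
  proof (rule NB[OF s l2norm_nonneg])
    fix F assume F: "finite F" "F \<subseteq> X"
    have "sqrt (\<Sum>x\<in>F. (cmod (rst A f x))\<^sup>2) \<le> sqrt (\<Sum>x\<in>F. (cmod (f x))\<^sup>2)"
      by (intro real_sqrt_le_mono sum_mono) (auto simp: rst_def)
    also have "\<dots> \<le> sqrt ((l2norm X f)\<^sup>2)"
      by (intro real_sqrt_le_mono NL F l2_D assms)
    finally show "sqrt (\<Sum>x\<in>F. (cmod (rst A f x))\<^sup>2) \<le> l2norm X f"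
      using l2norm_nonneg[of X f] by simp
  qed
qed

lemma l2_fin:
  assumes "finite H" "H \<subseteq> X" "\<And>x. x \<notin> H \<Longrightarrow> f x = 0"
  shows "f \<in> l2 X" "l2norm X f = sqrt (\<Sum>x\<in>H. (cmod (f x))\<^sup>2)"
proof -
  have "(\<lambda>x. (cmod (f x))\<^sup>2) summable_on X \<longleftrightarrow> (\<lambda>x. (cmod (f x))\<^sup>2) summable_on H"
    by (rule summable_on_cong_neutral) (use assms in auto)
  thus "f \<in> l2 X" using assms by (auto simp: l2_def)
  have "infsum (\<lambda>x. (cmod (f x))\<^sup>2) X = infsum (\<lambda>x. (cmod (f x))\<^sup>2) H"
    by (rule infsum_cong_neutral) (use assms in auto)
  thus "l2norm X f = sqrt (\<Sum>x\<in>H. (cmod (f x))\<^sup>2)" using assms by (simp add: l2norm_def)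
qed

lemma l2_tri:
  assumes "f \<in> l2 X" "g \<in> l2 X"
  shows "l2norm X (\<lambda>x. f x + g x) \<le> l2norm X f + l2norm X g"
proof (rule NB[OF l2_D(1)[OF l2_add[OF assms]]])
  show "0 \<le> l2norm X f + l2norm X g" using l2norm_nonneg[of X f] l2norm_nonneg[of X g] by simp
  fix F assume F: "finite F" "F \<subseteq> X"
  have "sqrt (\<Sum>x\<in>F. (cmod (f x + g x))\<^sup>2) = L2_set (\<lambda>x. cmod (f x + g x)) F"
    by (simp add: L2_set_def)
  also have "\<dots> \<le> L2_set (\<lambda>x. cmod (f x) + cmod (g x)) F"
    by (rule L2_set_mono) (auto intro: norm_triangle_ineq)
  also have "\<dots> \<le> L2_set (\<lambda>x. cmod (f x)) F + L2_set (\<lambda>x. cmod (g x)) F"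
    by (rule L2_set_triangle_ineq)
  also have "L2_set (\<lambda>x. cmod (f x)) F \<le> l2norm X f"
    using real_sqrt_le_mono[OF NL[OF l2_D(1)[OF assms(1)] F]] l2norm_nonneg[of X f]
    by (simp add: L2_set_def)
  also have "L2_set (\<lambda>x. cmod (g x)) F \<le> l2norm X g"
    using real_sqrt_le_mono[OF NL[OF l2_D(1)[OF assms(2)] F]] l2norm_nonneg[of X g]
    by (simp add: L2_set_def)
  finally show "sqrt (\<Sum>x\<in>F. (cmod (f x + g x))\<^sup>2) \<le> l2norm X f + l2norm X g" by simp
qed

lemma l2_metric: "Metric_space (l2 X) (l2dist X)"
proof
  fix f g h
  show "0 \<le> l2dist X f g" by (simp add: l2dist_def l2norm_nonneg)
  show "l2dist X f g = l2dist X g f" 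
    by (simp add: l2dist_def l2norm_def norm_minus_commute)
  assume f: "f \<in> l2 X" and g: "g \<in> l2 X"
  show "l2dist X f g = 0 \<longleftrightarrow> f = g"
  proof
    assume 0: "l2dist X f g = 0"
    show "f = g"
    proof
      fix x show "f x = g x"
      proof (cases "x \<in> X")
        case True
        have "cmod (f x - g x) \<le> 0"
          using NP[OF l2_D(1)[OF l2_diff[OF f g]] True] 0 by (simp add: l2dist_def)
        thus ?thesis by simp
      qed (use f g in \<open>auto simp: l2_def\<close>)
    qed
  qed (simp add: l2dist_def l2norm_def)
  assume h: "h \<in> l2 X"
  have "l2norm X (\<lambda>x. (f x - g x) + (g x - h x)) \<le> l2norm X (\<lambda>x. f x - g x) + l2norm X (\<lambda>x. g x - h x)"
    by (intro l2_tri l2_diff f g h)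
  thus "l2dist X f h \<le> l2dist X f g + l2dist X g h" by (simp add: l2dist_def)
qed



lemma l2_pt: "f \<in> l2 Y \<Longrightarrow> cmod (f y) \<le> l2norm Y f"
  by (cases "y \<in> Y") (auto simp: l2_def l2norm_nonneg intro!: NP)

lemma TL:
  fixes h :: "'a \<Rightarrow> real"
  assumes s: "h summable_on X" and nn: "\<And>x. 0 \<le> h x" and "\<eta> > 0"
  shows "\<exists>G. finite G \<and> G \<subseteq> X \<and> (\<forall>F. finite F \<longrightarrow> F \<subseteq> X - G \<longrightarrow> sum h F \<le> \<eta>)"
proof -
  let ?S = "infsum h X"
  have "\<exists>G. finite G \<and> G \<subseteq> X \<and> sum h G > ?S - \<eta>"
  proof (rule ccontr)
    assume "\<not> ?thesis"
    hence "?S \<le> ?S - \<eta>" by (intro infsum_le_finite_sums[OF s]) (auto simp: not_less)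
    thus False using assms by simp
  qed
  then obtain G where G: "finite G" "G \<subseteq> X" "sum h G > ?S - \<eta>" by blast
  { fix F assume F: "finite F" "F \<subseteq> X - G"
    have "sum h (G \<union> F) \<le> ?S" by (rule finite_sum_le_infsum[OF s]) (use F G nn in auto)
    moreover have "sum h (G \<union> F) = sum h G + sum h F" using F G by (intro sum.union_disjoint) auto
    ultimately have "sum h F \<le> \<eta>" using G by simp }
  thus ?thesis using G by blast
qed

lemma TL2:
  assumes "h \<in> l2 X" "\<eta> > 0"
  shows "\<exists>G. finite G \<and> G \<subseteq> X \<and> l2norm X (rst (-G) h) \<le> \<eta>"
proof -
  obtain G where G: "finite G" "G \<subseteq> X"
    and t: "\<And>F. finite F \<Longrightarrow> F \<subseteq> X - G \<Longrightarrow> (\<Sum>x\<in>F. (cmod (h x))\<^sup>2) \<le> \<eta>\<^sup>2"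
    using TL[OF l2_D(1)[OF assms(1)], of "\<eta>\<^sup>2"] assms by auto
  have "l2norm X (rst (-G) h) \<le> \<eta>"
  proof (rule NB[OF l2_D(1)[OF l2_rst(1)[OF assms(1)]]])
    show "0 \<le> \<eta>" using assms by simp
    fix F assume F: "finite F" "F \<subseteq> X"
    have "(\<Sum>x\<in>F. (cmod (rst (-G) h x))\<^sup>2) = (\<Sum>x\<in>F - G. (cmod (h x))\<^sup>2)"
      using F by (intro sum.mono_neutral_cong_right) (auto simp: rst_def)
    also have "\<dots> \<le> \<eta>\<^sup>2" using F by (intro t) auto
    finally show "sqrt (\<Sum>x\<in>F. (cmod (rst (-G) h x))\<^sup>2) \<le> \<eta>"
      using assms real_sqrt_le_mono by fastforce
  qed
  thus ?thesis using G by blast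
qed

lemma delta_l2: "x \<in> X \<Longrightarrow> delta x \<in> l2 X"
  by (rule l2_fin(1)[of "{x}"]) (auto simp: delta_def)

lemma bo_l2: "bounded_op X Y T \<Longrightarrow> f \<in> l2 X \<Longrightarrow> T f \<in> l2 Y"
  by (simp add: bounded_op_def)
lemma bo_add: "bounded_op X Y T \<Longrightarrow> f \<in> l2 X \<Longrightarrow> g \<in> l2 X \<Longrightarrow> T (\<lambda>x. f x + g x) = (\<lambda>y. T f y + T g y)"
  by (simp add: bounded_op_def)
lemma bo_scale: "bounded_op X Y T \<Longrightarrow> f \<in> l2 X \<Longrightarrow> T (\<lambda>x. c * f x) = (\<lambda>y. c * T f y)"
  by (simp add: bounded_op_def)
lemma bo_bound: assumes "bounded_op X Y T"
  obtains C where "C \<ge> 0" "\<And>f. f \<in> l2 X \<Longrightarrow> l2norm Y (T f) \<le> C * l2norm X f"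
proof -
  obtain C where C: "\<forall>f\<in>l2 X. l2norm Y (T f) \<le> C * l2norm X f" using assms by (auto simp: bounded_op_def)
  show ?thesis
  proof (rule that[of "max C 0"])
    fix f assume f: "f \<in> l2 X"
    have "C * l2norm X f \<le> max C 0 * l2norm X f" by (intro mult_right_mono) (auto simp: l2norm_nonneg)
    thus "l2norm Y (T f) \<le> max C 0 * l2norm X f" using C f by force
  qed simp
qed
lemma bo_zero: "bounded_op X Y T \<Longrightarrow> T (\<lambda>x. 0) = (\<lambda>y. 0)"
  using bo_scale[of X Y T "\<lambda>x. 0" 0] zero_l2[of X] by simp

lemma bo_sum:
  assumes "bounded_op X Y T" "finite H" "H \<subseteq> X"
  shows "T (\<lambda>z. \<Sum>x\<in>H. a x * delta x z) y = (\<Sum>x\<in>H. a x * T (delta x) y)"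
  using assms(2,3)
proof (induction H rule: finite_induct)
  case empty
  then show ?case using bo_zero[OF assms(1)] by simp
next
  case (insert x H)
  have l: "(\<lambda>z. \<Sum>x\<in>H. a x * delta x z) \<in> l2 X"
    by (rule l2_fin(1)[of H]) (use insert in \<open>auto simp: delta_def if_distrib cong: if_cong\<close>)
  have d: "(\<lambda>z. a x * delta x z) \<in> l2 X" using insert by (intro l2_scale delta_l2) auto
  have "T (\<lambda>z. \<Sum>x\<in>insert x H. a x * delta x z) = T (\<lambda>z. a x * delta x z + (\<Sum>x\<in>H. a x * delta x z))"
    using insert by simp
  also have "\<dots> = (\<lambda>y. T (\<lambda>z. a x * delta x z) y + T (\<lambda>z. \<Sum>x\<in>H. a x * delta x z) y)"
    by (rule bo_add[OF assms(1) d l])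
  finally show ?case using insert bo_scale[OF assms(1) delta_l2[of x X], of "a x"] by simp
qed

lemma rst_sum: "finite H \<Longrightarrow> rst H g = (\<lambda>z. \<Sum>x\<in>H. g x * delta x z)"
  by (auto simp: rst_def delta_def fun_eq_iff if_distrib cong: if_cong)

lemma rst_split: "(\<lambda>x. rst A f x + rst (-A) f x) = f"
  by (auto simp: rst_def)



lemma row_summable:
  assumes T: "bounded_op X Y T"
  shows "(\<lambda>x. (cmod (T (delta x) y))\<^sup>2) summable_on X"
proof -
  obtain C where C0: "C \<ge> 0" and C: "\<And>f. f \<in> l2 X \<Longrightarrow> l2norm Y (T f) \<le> C * l2norm X f"
    using bo_bound[OF T] by blast
  define c where "c x = T (delta x) y" for x
  show ?thesis unfolding c_def[symmetric]
  proof (rule nonneg_bdd_above_summable_on)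
    show "bdd_above (sum (\<lambda>x. (cmod (c x))\<^sup>2) ` {F. F \<subseteq> X \<and> finite F})"
    proof (rule bdd_aboveI2)
      fix H assume H: "H \<in> {F. F \<subseteq> X \<and> finite F}"
      define s where "s = (\<Sum>x\<in>H. (cmod (c x))\<^sup>2)"
      have s0: "s \<ge> 0" by (simp add: s_def sum_nonneg)
      define v where "v = rst H (\<lambda>x. cnj (c x))"
      have vs: "v = (\<lambda>z. \<Sum>x\<in>H. cnj (c x) * delta x z)" using H by (simp add: v_def rst_sum)
      have vl: "v \<in> l2 X" "l2norm X v = sqrt s"
        using l2_fin[of H X v] H by (auto simp: v_def rst_def s_def)
      have "T v y = (\<Sum>x\<in>H. cnj (c x) * c x)" unfolding vs using H
        by (subst bo_sum[OF T]) (auto simp: c_def)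
      also have "\<dots> = of_real s" unfolding s_def of_real_sum
        by (intro sum.cong refl) (simp add: complex_mult_cnj cmod_power2 mult.commute)
      finally have "s = cmod (T v y)" using s0 by simp
      also have "\<dots> \<le> l2norm Y (T v)" by (rule l2_pt[OF bo_l2[OF T vl(1)]])
      also have "\<dots> \<le> C * sqrt s" using C[OF vl(1)] vl(2) by simp
      finally have le: "s \<le> C * sqrt s" .
      have "s \<le> C\<^sup>2"
      proof (cases "s = 0")
        case False
        hence "sqrt s > 0" using s0 by simp
        have "sqrt s * sqrt s \<le> C * sqrt s" using le s0 by simp
        hence "sqrt s \<le> C" using \<open>sqrt s > 0\<close> mult_le_cancel_right_pos[of "sqrt s" "sqrt s" C] by linarith
        hence "(sqrt s)\<^sup>2 \<le> C\<^sup>2" using s0 by (intro power_mono) auto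
        thus ?thesis using s0 by simp
      qed simp
      thus "(\<Sum>x\<in>H. (cmod (c x))\<^sup>2) \<le> C\<^sup>2" by (simp add: s_def)
    qed
  qed simp
qed

lemma row_tail:
  assumes T: "bounded_op X Y T" and "\<eta> > 0"
  shows "\<exists>F. finite F \<and> F \<subseteq> X \<and> (\<forall>g\<in>l2 X. l2norm X g \<le> 1 \<longrightarrow> (\<forall>x\<in>F. g x = 0) \<longrightarrow> cmod (T g y) \<le> \<eta>)"
proof -
  obtain C where C0: "C \<ge> 0" and C: "\<And>f. f \<in> l2 X \<Longrightarrow> l2norm Y (T f) \<le> C * l2norm X f"
    using bo_bound[OF T] by blast
  define c where "c x = T (delta x) y" for x
  obtain F where F: "finite F" "F \<subseteq> X"
    and t: "\<And>H. finite H \<Longrightarrow> H \<subseteq> X - F \<Longrightarrow> (\<Sum>x\<in>H. (cmod (c x))\<^sup>2) \<le> \<eta>\<^sup>2"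
    using TL[OF row_summable[OF T, of y], of "\<eta>\<^sup>2"] assms unfolding c_def by auto
  have "cmod (T g y) \<le> \<eta>" if g: "g \<in> l2 X" "l2norm X g \<le> 1" "\<forall>x\<in>F. g x = 0" for g
  proof (rule field_le_epsilon)
    fix e :: real assume e: "e > 0"
    obtain H where H: "finite H" "H \<subseteq> X" and Hs: "l2norm X (rst (-H) g) \<le> e / (C + 1)"
      using TL2[OF g(1), of "e / (C+1)"] e C0 by auto
    have split: "T g y = T (rst H g) y + T (rst (-H) g) y"
      using bo_add[OF T l2_rst(1)[OF g(1)] l2_rst(1)[OF g(1)], of H "-H"] rst_split[of H g]
      by (metis (no_types))
    have "cmod (T (rst (-H) g) y) \<le> C * l2norm X (rst (-H) g)"
      using l2_pt[OF bo_l2[OF T l2_rst(1)[OF g(1)]]] C[OF l2_rst(1)[OF g(1)]] by (meson order_trans)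
    also have "\<dots> \<le> C * (e / (C + 1))" using Hs C0 by (intro mult_left_mono) auto
    also have "\<dots> \<le> e" using C0 e by (simp add: field_simps)
    finally have b2: "cmod (T (rst (-H) g) y) \<le> e" .
    have "T (rst H g) y = (\<Sum>x\<in>H. g x * c x)"
      unfolding rst_sum[OF H(1)] c_def using bo_sum[OF T H] by simp
    also have "\<dots> = (\<Sum>x\<in>H - F. g x * c x)"
      using H g(3) by (intro sum.mono_neutral_right) auto
    finally have "cmod (T (rst H g) y) \<le> (\<Sum>x\<in>H - F. \<bar>cmod (g x)\<bar> * \<bar>cmod (c x)\<bar>)"
      by (auto intro: order_trans[OF norm_sum] simp: norm_mult)
    also have "\<dots> \<le> L2_set (\<lambda>x. cmod (g x)) (H - F) * L2_set (\<lambda>x. cmod (c x)) (H - F)"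
      by (rule L2_set_mult_ineq)
    also have "\<dots> \<le> 1 * \<eta>"
    proof (rule mult_mono)
      have "L2_set (\<lambda>x. cmod (g x)) (H - F) \<le> sqrt ((l2norm X g)\<^sup>2)"
        unfolding L2_set_def using H by (intro real_sqrt_le_mono NL l2_D(1)[OF g(1)]) auto
      thus "L2_set (\<lambda>x. cmod (g x)) (H - F) \<le> 1" using g(2) l2norm_nonneg[of X g] by simp
      have "L2_set (\<lambda>x. cmod (c x)) (H - F) \<le> sqrt (\<eta>\<^sup>2)"
        unfolding L2_set_def using H by (intro real_sqrt_le_mono t) auto
      thus "L2_set (\<lambda>x. cmod (c x)) (H - F) \<le> \<eta>" using assms(2) by simp
    qed (auto simp: L2_set_def sum_nonneg)
    finally have b1: "cmod (T (rst H g) y) \<le> \<eta>" by simp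
    show "cmod (T g y) \<le> \<eta> + e" unfolding split using b1 b2 norm_triangle_ineq
      by (smt (verit))
  qed
  thus ?thesis using F by blast
qed



lemma step1:
  assumes T: "bounded_op X Y T"
    and tb: "Metric_space.mtotally_bounded (l2 Y) (l2dist Y) (T ` {f\<in>l2 X. l2norm X f \<le> 1})"
    and e: "e > 0"
  shows "\<exists>G. finite G \<and> G \<subseteq> Y \<and> (\<forall>f\<in>l2 X. l2norm X f \<le> 1 \<longrightarrow> l2norm Y (rst (-G) (T f)) \<le> 2*e)"
proof -
  interpret M: Metric_space "l2 Y" "l2dist Y" by (rule l2_metric)
  obtain K where K: "finite K" "K \<subseteq> T ` {f\<in>l2 X. l2norm X f \<le> 1}"
    "T ` {f\<in>l2 X. l2norm X f \<le> 1} \<subseteq> (\<Union>k\<in>K. M.mball k e)"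
    using tb e unfolding M.mtotally_bounded_def by meson
  have Kl: "k \<in> l2 Y" if "k \<in> K" for k using K(2) that bo_l2[OF T] by blast
  have "\<forall>k\<in>K. \<exists>G. finite G \<and> G \<subseteq> Y \<and> l2norm Y (rst (-G) k) \<le> e"
    using TL2[OF Kl e] by blast
  then obtain Gf where Gf: "\<And>k. k \<in> K \<Longrightarrow> finite (Gf k) \<and> Gf k \<subseteq> Y \<and> l2norm Y (rst (- Gf k) k) \<le> e"
    by metis
  define G where "G = \<Union>(Gf ` K)"
  have G: "finite G" "G \<subseteq> Y" using Gf K(1) by (auto simp: G_def)
  have "l2norm Y (rst (-G) (T f)) \<le> 2*e" if f: "f \<in> l2 X" "l2norm X f \<le> 1" for f
  proof -
    obtain k where k: "k \<in> K" "T f \<in> M.mball k e" using K(3) f by blast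
    have kl: "k \<in> l2 Y" using Kl k by simp
    have Tl: "T f \<in> l2 Y" using bo_l2[OF T f(1)] .
    have dist: "l2dist Y k (T f) < e" using k by simp
    have eq: "rst (-G) (T f) = (\<lambda>y. rst (-G) (\<lambda>y. T f y - k y) y + rst (-G) k y)"
      by (auto simp: rst_def)
    have "l2norm Y (rst (-G) (T f)) \<le> l2norm Y (rst (-G) (\<lambda>y. T f y - k y)) + l2norm Y (rst (-G) k)"
      unfolding eq by (intro l2_tri l2_rst l2_diff Tl kl)
    also have "l2norm Y (rst (-G) (\<lambda>y. T f y - k y)) \<le> l2norm Y (\<lambda>y. T f y - k y)"
      by (intro l2_rst l2_diff Tl kl)
    also have "\<dots> = l2dist Y k (T f)" using M.commute[of k "T f"] by (simp add: l2dist_def)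
    also have "rst (-G) k = rst (-G) (rst (- Gf k) k)" using k(1) by (auto simp: rst_def G_def)
    also have "l2norm Y \<dots> \<le> l2norm Y (rst (- Gf k) k)" by (intro l2_rst l2_rst kl)
    also have "\<dots> \<le> e" using Gf k by blast
    finally show ?thesis using dist by simp
  qed
  thus ?thesis using G by blast
qed

lemma step2:
  assumes T: "bounded_op X Y T" and G: "finite G" and "\<eta> > 0"
  shows "\<exists>F. finite F \<and> F \<subseteq> X \<and> (\<forall>g\<in>l2 X. l2norm X g \<le> 1 \<longrightarrow> (\<forall>x\<in>F. g x = 0) \<longrightarrow> (\<forall>y\<in>G. cmod (T g y) \<le> \<eta>))"
proof -
  have "\<forall>y\<in>G. \<exists>F. finite F \<and> F \<subseteq> X \<and> (\<forall>g\<in>l2 X. l2norm X g \<le> 1 \<longrightarrow> (\<forall>x\<in>F. g x = 0) \<longrightarrow> cmod (T g y) \<le> \<eta>)"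
    using row_tail[OF T assms(3)] by blast
  then obtain Ff where Ff: "\<And>y. y \<in> G \<Longrightarrow> finite (Ff y) \<and> Ff y \<subseteq> X \<and> (\<forall>g\<in>l2 X. l2norm X g \<le> 1 \<longrightarrow> (\<forall>x\<in>Ff y. g x = 0) \<longrightarrow> cmod (T g y) \<le> \<eta>)"
    by metis
  show ?thesis
    by (rule exI[of _ "\<Union>(Ff ` G)"]) (use Ff G in auto)
qed

lemma part1:
  assumes C: "compact_op X Y T"
  shows "in_Md X Y d T"
proof -
  interpret M: Metric_space "l2 Y" "l2dist Y" by (rule l2_metric)
  have T: "bounded_op X Y T" using C by (simp add: compact_op_def)
  obtain CT where CT0: "CT \<ge> 0" and CT: "\<And>f. f \<in> l2 X \<Longrightarrow> l2norm Y (T f) \<le> CT * l2norm X f"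
    using bo_bound[OF T] by blast
  let ?B = "{f\<in>l2 X. l2norm X f \<le> 1}"
  have sub: "T ` ?B \<subseteq> M.mtopology closure_of (T ` ?B)"
    by (rule closure_of_subset) (use bo_l2[OF T] in auto)
  have tb: "M.mtotally_bounded (T ` ?B)"
  proof -
    have "compactin M.mtopology (M.mtopology closure_of (T ` ?B))"
      using C unfolding compact_op_def by blast
    hence "M.mtotally_bounded (M.mtopology closure_of (T ` ?B))"
      by (rule M.compactin_imp_mtotally_bounded)
    thus ?thesis using sub by (rule M.mtotally_bounded_subset)
  qed
  show ?thesis unfolding in_Md_def
  proof (intro conjI T allI impI)
    fix \<epsilon> :: real assume \<epsilon>: "\<epsilon> > 0"
    define e where "e = \<epsilon> / 4"
    have e: "e > 0" using \<epsilon> by (simp add: e_def)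
    obtain G where G: "finite G" "G \<subseteq> Y"
      and G1: "\<And>f. f \<in> l2 X \<Longrightarrow> l2norm X f \<le> 1 \<Longrightarrow> l2norm Y (rst (-G) (T f)) \<le> 2*e"
      using step1[OF T tb e] by blast
    define \<eta> where "\<eta> = e / (real (card G) + 1)"
    have \<eta>: "\<eta> > 0" using e by (simp add: \<eta>_def)
    obtain F where F: "finite F" "F \<subseteq> X"
      and F1: "\<And>g y. g \<in> l2 X \<Longrightarrow> l2norm X g \<le> 1 \<Longrightarrow> \<forall>x\<in>F. g x = 0 \<Longrightarrow> y \<in> G \<Longrightarrow> cmod (T g y) \<le> \<eta>"
      using step2[OF T G(1) \<eta>] by blast
    define S where "S = (\<lambda>f. rst G (T (rst F f)))"
    have Sl: "S f \<in> l2 Y" "l2norm Y (S f) \<le> CT * l2norm X f" if f: "f \<in> l2 X" for f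
    proof -
      show "S f \<in> l2 Y" unfolding S_def by (intro l2_rst bo_l2[OF T] f)
      have "l2norm Y (S f) \<le> l2norm Y (T (rst F f))" unfolding S_def by (intro l2_rst bo_l2[OF T] f)
      also have "\<dots> \<le> CT * l2norm X (rst F f)" by (intro CT l2_rst f)
      also have "\<dots> \<le> CT * l2norm X f" by (intro mult_left_mono CT0 l2_rst f)
      finally show "l2norm Y (S f) \<le> CT * l2norm X f" .
    qed
    have bS: "bounded_op X Y S"
      unfolding bounded_op_def
    proof (intro conjI ballI allI)
      fix f g assume f: "f \<in> l2 X" and g: "g \<in> l2 X"
      have "rst F (\<lambda>x. f x + g x) = (\<lambda>x. rst F f x + rst F g x)" by (auto simp: rst_def)
      thus "S (\<lambda>x. f x + g x) = (\<lambda>y. S f y + S g y)"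
        unfolding S_def using bo_add[OF T l2_rst(1)[OF f] l2_rst(1)[OF g], of F F]
        by (auto simp: rst_def)
    next
      fix f c assume f: "f \<in> l2 X"
      have "rst F (\<lambda>x. c * f x) = (\<lambda>x. c * rst F f x)" by (auto simp: rst_def)
      thus "S (\<lambda>x. c * f x) = (\<lambda>y. c * S f y)"
        unfolding S_def using bo_scale[OF T l2_rst(1)[OF f, of F], of c]
        by (auto simp: rst_def)
    qed (use Sl in auto)
    have fpS: "finite_propagation X Y d S"
      unfolding finite_propagation_def
    proof (intro exI ballI impI)
      define L where "L = Max (insert 0 ((\<lambda>(x,y). d (Inl x) (Inr y)) ` (F \<times> G))) + 1"
      fix x y assume x: "x \<in> X" and y: "y \<in> Y" and dL: "L \<le> d (Inl x) (Inr y)"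
      have "\<not> (x \<in> F \<and> y \<in> G)"
      proof
        assume "x \<in> F \<and> y \<in> G"
        hence "d (Inl x) (Inr y) \<le> Max (insert 0 ((\<lambda>(x,y). d (Inl x) (Inr y)) ` (F \<times> G)))"
          using F G by (intro Max_ge) auto
        thus False using dL by (simp add: L_def)
      qed
      moreover have "x \<notin> F \<Longrightarrow> rst F (delta x) = (\<lambda>x. 0)" by (auto simp: rst_def delta_def)
      ultimately show "matrix_coeff S y x = 0"
        unfolding matrix_coeff_def S_def using bo_zero[OF T] by (auto simp: rst_def)
    qed
    have bound: "l2norm Y (\<lambda>y. T f y - S f y) \<le> 3 * e" if f: "f \<in> l2 X" "l2norm X f \<le> 1" for f
    proof -
      let ?g = "rst (-F) f"
      have gl: "?g \<in> l2 X" "l2norm X ?g \<le> 1" using l2_rst[OF f(1), of "-F"] f(2) by auto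
      have Tsplit: "T f = (\<lambda>y. T (rst F f) y + T ?g y)"
        using bo_add[OF T l2_rst(1)[OF f(1)] l2_rst(1)[OF f(1)], of F "-F"] rst_split[of F f]
        by metis
      have eq: "(\<lambda>y. T f y - S f y) = (\<lambda>y. rst (-G) (T f) y + rst G (T ?g) y)"
        unfolding S_def by (subst (1 2) Tsplit) (auto simp: rst_def fun_eq_iff)
      have l1: "rst (-G) (T f) \<in> l2 Y" "rst G (T ?g) \<in> l2 Y"
        by (intro l2_rst bo_l2[OF T] f gl)+
      have "l2norm Y (rst G (T ?g)) = sqrt (\<Sum>y\<in>G. (cmod (rst G (T ?g) y))\<^sup>2)"
        by (rule l2_fin(2)) (use G in \<open>auto simp: rst_def\<close>)
      also have "\<dots> \<le> sqrt (\<Sum>y\<in>G. \<eta>\<^sup>2)"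
      proof (intro real_sqrt_le_mono sum_mono)
        fix y assume y: "y \<in> G"
        have "cmod (T ?g y) \<le> \<eta>" by (rule F1[OF gl]) (use y in \<open>auto simp: rst_def\<close>)
        thus "(cmod (rst G (T ?g) y))\<^sup>2 \<le> \<eta>\<^sup>2" using y by (simp add: rst_def power_mono)
      qed
      also have "\<dots> \<le> e"
      proof -
        have "(\<Sum>y\<in>G. \<eta>\<^sup>2) = real (card G) * \<eta>\<^sup>2" by simp
        also have "\<dots> \<le> (real (card G) + 1)\<^sup>2 * \<eta>\<^sup>2"
        proof (intro mult_right_mono)
          have "real (card G) \<le> real (card G) + 1" by simp
          also have "\<dots> \<le> (real (card G) + 1) * (real (card G) + 1)" by simp
          finally show "real (card G) \<le> (real (card G) + 1)\<^sup>2" by (simp add: power2_eq_square)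
        qed simp
        also have "\<dots> = e\<^sup>2" by (simp add: \<eta>_def power_divide)
        finally show ?thesis using e by (simp add: real_sqrt_le_iff real_le_lsqrt)
      qed
      finally have b2: "l2norm Y (rst G (T ?g)) \<le> e" .
      have "l2norm Y (\<lambda>y. T f y - S f y) \<le> l2norm Y (rst (-G) (T f)) + l2norm Y (rst G (T ?g))"
        unfolding eq by (rule l2_tri[OF l1])
      thus ?thesis using G1[OF f] b2 by simp
    qed
    have "opnorm X Y (\<lambda>f y. T f y - S f y) \<le> 3 * e"
      unfolding opnorm_def
    proof (rule cSup_least)
      show "{l2norm Y (\<lambda>y. T f y - S f y) |f. f \<in> l2 X \<and> l2norm X f \<le> 1} \<noteq> {}"
        using zero_l2[of X] l2norm_zero[of X] by auto
    qed (use bound in auto)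
    hence "opnorm X Y (\<lambda>f y. T f y - S f y) < \<epsilon>" using e e_def \<epsilon> by simp
    thus "\<exists>S. bounded_op X Y S \<and> finite_propagation X Y d S \<and> opnorm X Y (\<lambda>f y. T f y - S f y) < \<epsilon>"
      using bS fpS by blast
  qed
qed



lemma part2:
  assumes H: "\<forall>T. in_Md X Y d T \<longrightarrow> compact_op X Y T"
    and f: "f \<in> X \<rightarrow> Y" "inj_on f X"
  shows "finite {x \<in> X. d (Inl x) (Inr (f x)) \<le> 1}"
proof (rule ccontr)
  define A where "A = {x \<in> X. d (Inl x) (Inr (f x)) \<le> 1}"
  assume inf: "infinite {x \<in> X. d (Inl x) (Inr (f x)) \<le> 1}"
  hence infA: "infinite A" by (simp add: A_def)
  have AX: "A \<subseteq> X" by (auto simp: A_def)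
  have injA: "inj_on f A" using f(2) AX inj_on_subset by blast
  have fAY: "f ` A \<subseteq> Y" using f(1) AX by auto
  define g where "g = inv_into A f"
  have gf: "g (f x) = x" if "x \<in> A" for x using injA that by (simp add: g_def)
  define V where "V = (\<lambda>h::'a \<Rightarrow> complex. \<lambda>y. if y \<in> f ` A then h (g y) else 0)"
  have Vl: "V h \<in> l2 Y" "l2norm Y (V h) \<le> l2norm X h" if h: "h \<in> l2 X" for h
  proof -
    have sA: "(\<lambda>x. (cmod (h x))\<^sup>2) summable_on A"
      using summable_on_subset[OF l2_D(1)[OF h] AX] .
    have "((\<lambda>y. (cmod (V h y))\<^sup>2) \<circ> f) summable_on A"
      using sA by (rule summable_on_cong[THEN iffD1, rotated]) (auto simp: V_def gf)
    hence sfA: "(\<lambda>y. (cmod (V h y))\<^sup>2) summable_on (f ` A)"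
      by (simp add: summable_on_reindex[OF injA])
    have "(\<lambda>y. (cmod (V h y))\<^sup>2) summable_on Y \<longleftrightarrow> (\<lambda>y. (cmod (V h y))\<^sup>2) summable_on (f ` A)"
      by (rule summable_on_cong_neutral) (use fAY in \<open>auto simp: V_def\<close>)
    hence sY: "(\<lambda>y. (cmod (V h y))\<^sup>2) summable_on Y" using sfA by simp
    show "V h \<in> l2 Y" by (rule l2_I[OF sY]) (use fAY in \<open>auto simp: V_def\<close>)
    have "infsum (\<lambda>y. (cmod (V h y))\<^sup>2) Y = infsum (\<lambda>y. (cmod (V h y))\<^sup>2) (f ` A)"
      by (rule infsum_cong_neutral) (use fAY in \<open>auto simp: V_def\<close>)
    also have "\<dots> = infsum ((\<lambda>y. (cmod (V h y))\<^sup>2) \<circ> f) A" by (rule infsum_reindex[OF injA])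
    also have "\<dots> = infsum (\<lambda>x. (cmod (h x))\<^sup>2) A" by (rule infsum_cong) (auto simp: V_def gf)
    also have "\<dots> \<le> infsum (\<lambda>x. (cmod (h x))\<^sup>2) X"
      by (rule infsum_mono_neutral[OF sA l2_D(1)[OF h]]) (use AX in auto)
    finally show "l2norm Y (V h) \<le> l2norm X h" unfolding l2norm_def by (rule real_sqrt_le_mono)
  qed
  have bV: "bounded_op X Y V"
    unfolding bounded_op_def
  proof (intro conjI ballI allI)
    show "\<exists>C. \<forall>h\<in>l2 X. l2norm Y (V h) \<le> C * l2norm X h" using Vl by (intro exI[of _ 1]) auto
    show "V h \<in> l2 Y" if "h \<in> l2 X" for h using Vl(1)[OF that] .
  qed (simp_all add: V_def fun_eq_iff)
  have fpV: "finite_propagation X Y d V"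
    unfolding finite_propagation_def
  proof (intro exI[of _ 2] ballI impI)
    fix x y assume x: "x \<in> X" and y: "y \<in> Y" and d2: "2 \<le> d (Inl x) (Inr y)"
    show "matrix_coeff V y x = 0"
    proof (rule ccontr)
      assume "matrix_coeff V y x \<noteq> 0"
      hence yA: "y \<in> f ` A" and gy: "g y = x" by (auto simp: matrix_coeff_def V_def delta_def split: if_splits)
      then obtain x' where x': "x' \<in> A" "y = f x'" by blast
      hence "x' = x" using gy gf by simp
      thus False using x' d2 by (simp add: A_def)
    qed
  qed
  have MV: "in_Md X Y d V"
    unfolding in_Md_def
  proof (intro conjI bV allI impI)
    fix \<epsilon> :: real assume \<epsilon>: "\<epsilon> > 0"
    have "{l2norm Y (\<lambda>y. V h y - V h y) |h. h \<in> l2 X \<and> l2norm X h \<le> 1} = {0}"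
      using zero_l2[of X] l2norm_zero[of X] l2norm_zero[of Y] by auto
    hence "opnorm X Y (\<lambda>h y. V h y - V h y) = 0" unfolding opnorm_def by simp
    thus "\<exists>S. bounded_op X Y S \<and> finite_propagation X Y d S \<and> opnorm X Y (\<lambda>h y. V h y - S h y) < \<epsilon>"
      using bV fpV \<epsilon> by auto
  qed
  have CV: "compact_op X Y V" using H MV by blast
  interpret M: Metric_space "l2 Y" "l2dist Y" by (rule l2_metric)
  let ?B = "{h\<in>l2 X. l2norm X h \<le> 1}"
  have sub: "V ` ?B \<subseteq> M.mtopology closure_of (V ` ?B)"
    by (rule closure_of_subset) (use Vl in auto)
  have tb: "M.mtotally_bounded (V ` ?B)"
  proof -
    have "compactin M.mtopology (M.mtopology closure_of (V ` ?B))"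
      using CV unfolding compact_op_def by blast
    hence "M.mtotally_bounded (M.mtopology closure_of (V ` ?B))"
      by (rule M.compactin_imp_mtotally_bounded)
    thus ?thesis using sub by (rule M.mtotally_bounded_subset)
  qed
  obtain K where K: "finite K" "K \<subseteq> V ` ?B" "V ` ?B \<subseteq> (\<Union>k\<in>K. M.mball k (1/2))"
    using tb unfolding M.mtotally_bounded_def by (meson half_gt_zero zero_less_one)
  have Vd: "V (delta x) = delta (f x)" if "x \<in> A" for x
  proof
    fix y show "V (delta x) y = delta (f x) y"
      using that gf by (auto simp: V_def delta_def)
  qed
  have dB: "delta x \<in> ?B" if "x \<in> X" for x
  proof -
    have "l2norm X (delta x) = sqrt (\<Sum>z\<in>{x}. (cmod (delta x z))\<^sup>2)"
      by (rule l2_fin(2)) (use that in \<open>auto simp: delta_def\<close>)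
    thus ?thesis using delta_l2[OF that] by (simp add: delta_def)
  qed
  have "\<forall>x\<in>A. \<exists>k\<in>K. delta (f x) \<in> M.mball k (1/2)"
  proof
    fix x assume x: "x \<in> A"
    have xX: "x \<in> X" using x AX by blast
    have "V (delta x) \<in> V ` ?B" by (rule imageI) (rule dB[OF xX])
    hence "delta (f x) \<in> V ` ?B" by (simp only: Vd[OF x])
    thus "\<exists>k\<in>K. delta (f x) \<in> M.mball k (1/2)" using K(3) by blast
  qed
  then obtain kf where kf: "\<And>x. x \<in> A \<Longrightarrow> kf x \<in> K \<and> delta (f x) \<in> M.mball (kf x) (1/2)" by metis
  have "\<not> inj_on kf A"
  proof
    assume "inj_on kf A"
    moreover have "kf ` A \<subseteq> K" using kf by blast
    hence "finite (kf ` A)" using K(1) by (rule finite_subset)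
    ultimately show False using infA finite_imageD by blast
  qed
  then obtain x1 x2 where x12: "x1 \<in> A" "x2 \<in> A" "x1 \<noteq> x2" "kf x1 = kf x2"
    unfolding inj_on_def by blast
  define k where "k = kf x1"
  have m1: "delta (f x1) \<in> M.mball k (1/2)" and m2: "delta (f x2) \<in> M.mball k (1/2)"
    using kf[OF x12(1)] kf[OF x12(2)] x12(4) unfolding k_def by simp_all
  have kl: "k \<in> l2 Y" and d1l: "delta (f x1) \<in> l2 Y" and d2l: "delta (f x2) \<in> l2 Y"
    using m1 m2 by auto
  have "l2dist Y (delta (f x1)) (delta (f x2)) \<le> l2dist Y (delta (f x1)) k + l2dist Y k (delta (f x2))"
    by (rule M.triangle[OF d1l kl d2l])
  also have "\<dots> < 1" using m1 m2 M.commute[of k "delta (f x1)"] by simp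
  finally have lt: "l2dist Y (delta (f x1)) (delta (f x2)) < 1" .
  have ne: "f x1 \<noteq> f x2" using inj_onD[OF injA _ x12(1) x12(2)] x12(3) by blast
  have "cmod (delta (f x1) (f x1) - delta (f x2) (f x1)) \<le> l2dist Y (delta (f x1)) (delta (f x2))"
    unfolding l2dist_def by (rule l2_pt[OF l2_diff[OF d1l d2l]])
  thus False using lt ne by (simp add: delta_def)
qed


theorem mainTheorem2:
  fixes X :: "'a set" and Y :: "'b set"
    and dX :: "'a \<Rightarrow> 'a \<Rightarrow> real" and dY :: "'b \<Rightarrow> 'b \<Rightarrow> real"
    and d :: "('a + 'b) \<Rightarrow> ('a + 'b) \<Rightarrow> real"
  assumes "countable X" and "countable Y"
    and "discrete_metric_space X dX" and "discrete_metric_space Y dY"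
    and "d \<in> Dmetrics X dX Y dY"
  shows "(\<forall>T. compact_op X Y T \<longrightarrow> in_Md X Y d T) \<and>
         ((\<forall>T. compact_op X Y T \<longleftrightarrow> in_Md X Y d T) \<longrightarrow>
            (\<exists>L>0. \<forall>f. f \<in> X \<rightarrow> Y \<and> inj_on f X \<longrightarrow>
                 finite {x \<in> X. d (Inl x) (Inr (f x)) \<le> L}))"
proof (intro conjI allI impI)
  fix T show "compact_op X Y T \<Longrightarrow> in_Md X Y d T" by (rule part1)
next
  assume H: "\<forall>T. compact_op X Y T \<longleftrightarrow> in_Md X Y d T"
  hence H': "\<forall>T. in_Md X Y d T \<longrightarrow> compact_op X Y T" by blast
  show "\<exists>L>0. \<forall>f. f \<in> X \<rightarrow> Y \<and> inj_on f X \<longrightarrow> finite {x \<in> X. d (Inl x) (Inr (f x)) \<le> L}"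
    using part2[OF H'] by (intro exI[of _ 1]) auto
qed

end
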